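(* Let $\xi$ be any DoS sequence. Then $$\mathcal{D}^{\circ}(\xi) = (\inf \mathcal{D}(\xi), 1) \quad\text{and}\quad \mathcal{F}^{\circ}(\xi) = (\inf \mathcal{F}(\xi), +\infty),$$ where $\Omega^{\circ}$ denotes the interior of a set $\Omega$.
   Context: A DoS sequence $\xi=\{H_n\}$ is a finite or infinite sequence of sets $H_n := \{h_n\}\cup[h_n,h_n+\tau_n)$, where $h_1\geqslant 0$, $\tau_n\geqslant 0$ and $h_{n+1} > h_n+\tau_n$ for all $n$ (so the $H_n$ are pairwise disjoint). If $\xi$ has only $m$ elements, the convention $h_{m+1}=h_{m+1}+\tau_{m+1}=+\infty$ is used. For $0\leqslant \tau\leqslant s$ let $\Xi(\tau,s) := \bigcup_n H_n\cap[\tau,s]$ and $n_\xi(\tau,s) := \operatorname{card}(\{h_n\}_n\cap[\tau,s])$; $\lvert\cdot\rvert$ denotes Lebesgue measure. A constant $B_d\in[0,1]$ is a duration-bound of $\xi$ if there is a constant $0<\kappa<+\infty$ with $\lvert \Xi(0,t)\rvert\leqslant \kappa + B_d t$ for all $t\geqslant 0$. A constant $B_f\in[0,+\infty)$ is a frequency-bound of $\xi$ if there is an integer $0<\Lambda<+\infty$ with $n_\xi(0,t)\leqslant \Lambda + B_f t$ for all $t\geqslant 0$; if no such finite $B_f$ exists, the frequency-bound of $\xi$ is defined to be $B_f=+\infty$. $\mathcal{D}(\xi)\subseteq[0,1]$ denotes the set of all duration-bounds of $\xi$ and $\mathcal{F}(\xi)\subseteq[0,+\infty]$ the set of all frequency-bounds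 of $\xi$. *)

theory Defs
  imports "HOL-Analysis.Analysis"
begin

text \<open>A DoS sequence with m elements (m :: enat, possibly infinite), indexed from 0:
  element n (for enat n < m) is H_n = {h n} \<union> [h n, h n + tau n).\<close>

definition is_DoS :: "enat \<Rightarrow> (nat \<Rightarrow> real) \<Rightarrow> (nat \<Rightarrow> real) \<Rightarrow> bool" where
  "is_DoS m h tau \<longleftrightarrow>
     (0 < m \<longrightarrow> 0 \<le> h 0) \<and>
     (\<forall>n. enat n < m \<longrightarrow> 0 \<le> tau n) \<and>
     (\<forall>n. enat (Suc n) < m \<longrightarrow> h n + tau n < h (Suc n))"

definition DoS_H :: "(nat \<Rightarrow> real) \<Rightarrow> (nat \<Rightarrow> real) \<Rightarrow> nat \<Rightarrow> real set" where
  "DoS_H h tau n = {h n} \<union> {h n..<h n + tau n}"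

definition DoS_Xi :: "enat \<Rightarrow> (nat \<Rightarrow> real) \<Rightarrow> (nat \<Rightarrow> real) \<Rightarrow> real \<Rightarrow> real \<Rightarrow> real set" where
  "DoS_Xi m h tau a s = (\<Union>n\<in>{n. enat n < m}. DoS_H h tau n) \<inter> {a..s}"

definition DoS_n :: "enat \<Rightarrow> (nat \<Rightarrow> real) \<Rightarrow> (nat \<Rightarrow> real) \<Rightarrow> real \<Rightarrow> real \<Rightarrow> ereal" where
  "DoS_n m h tau a s =
     (let S = {h n | n. enat n < m} \<inter> {a..s} in if finite S then ereal (real (card S)) else \<infinity>)"

definition duration_bound :: "enat \<Rightarrow> (nat \<Rightarrow> real) \<Rightarrow> (nat \<Rightarrow> real) \<Rightarrow> real \<Rightarrow> bool" where
  "duration_bound m h tau B \<longleftrightarrow> 0 \<le> B \<and> B \<le> 1 \<and>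
     (\<exists>\<kappa>::real. 0 < \<kappa> \<and> (\<forall>t\<ge>0. measure lborel (DoS_Xi m h tau 0 t) \<le> \<kappa> + B * t))"

definition finite_frequency_bound :: "enat \<Rightarrow> (nat \<Rightarrow> real) \<Rightarrow> (nat \<Rightarrow> real) \<Rightarrow> real \<Rightarrow> bool" where
  "finite_frequency_bound m h tau B \<longleftrightarrow> 0 \<le> B \<and>
     (\<exists>\<Lambda>::nat. 0 < \<Lambda> \<and> (\<forall>t\<ge>0. DoS_n m h tau 0 t \<le> ereal (real \<Lambda> + B * t)))"

definition DoS_D :: "enat \<Rightarrow> (nat \<Rightarrow> real) \<Rightarrow> (nat \<Rightarrow> real) \<Rightarrow> real set" where
  "DoS_D m h tau = {B. duration_bound m h tau B}"

definition DoS_F :: "enat \<Rightarrow> (nat \<Rightarrow> real) \<Rightarrow> (nat \<Rightarrow> real) \<Rightarrow> ereal set" where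
  "DoS_F m h tau = (if \<exists>B. finite_frequency_bound m h tau B
                    then ereal ` {B. finite_frequency_bound m h tau B} else {\<infinity>})"

end

theory Submission
  imports Defs
begin

lemma interior_real_upclosed:
  fixes D :: "real set"
  assumes one: "1 \<in> D" and le1: "\<And>x. x \<in> D \<Longrightarrow> x \<le> 1"
    and up: "\<And>x y. x \<in> D \<Longrightarrow> x \<le> y \<Longrightarrow> y \<le> 1 \<Longrightarrow> y \<in> D"
    and bdd: "bdd_below D"
  shows "interior D = {Inf D<..<1}"
proof
  show "{Inf D<..<1} \<subseteq> interior D"
  proof (rule interior_maximal)
    show "open {Inf D<..<1}" by simp
    show "{Inf D<..<1} \<subseteq> D"
    proof
      fix y assume y: "y \<in> {Inf D<..<1}"
      then have "Inf D < y" by simp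
      then obtain d where "d \<in> D" "d < y" using cInf_less_iff[of D y] one bdd by blast
      then show "y \<in> D" using up y by auto
    qed
  qed
next
  show "interior D \<subseteq> {Inf D<..<1}"
  proof
    fix x assume "x \<in> interior D"
    then obtain e where e: "e > 0" "ball x e \<subseteq> D" using mem_interior by blast
    have "x + e/2 \<in> D" "x - e/2 \<in> D" using e by (auto simp: dist_real_def)
    then have "x + e/2 \<le> 1" "Inf D \<le> x - e/2" using le1 cInf_lower[OF _ bdd] by auto
    then show "x \<in> {Inf D<..<1}" using e by auto
  qed
qed

lemma interior_ereal_upclosed:
  fixes R :: "real set"
  assumes ne: "R \<noteq> {}" and up: "\<And>x y. x \<in> R \<Longrightarrow> x \<le> y \<Longrightarrow> y \<in> R"
  shows "interior (ereal ` R) = {Inf (ereal ` R)<..<\<infinity>}"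
proof
  show "{Inf (ereal ` R)<..<\<infinity>} \<subseteq> interior (ereal ` R)"
  proof (rule interior_maximal)
    show "open {Inf (ereal ` R)<..<\<infinity>}" by simp
    show "{Inf (ereal ` R)<..<\<infinity>} \<subseteq> ereal ` R"
    proof
      fix y assume y: "y \<in> {Inf (ereal ` R)<..<\<infinity>}"
      then have "Inf (ereal ` R) < y" by simp
      then obtain r where r: "r \<in> R" "ereal r < y" by (auto simp: Inf_less_iff)
      then obtain s where s: "y = ereal s" using y by (cases y) auto
      then show "y \<in> ereal ` R" using up r by auto
    qed
  qed
next
  show "interior (ereal ` R) \<subseteq> {Inf (ereal ` R)<..<\<infinity>}"
  proof
    fix x assume x: "x \<in> interior (ereal ` R)"
    then obtain U where U: "open U" "x \<in> U" "U \<subseteq> ereal ` R" by (meson interiorE)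
    then obtain r where r: "x = ereal r" "r \<in> R" by auto
    have "open (ereal -` U)" using U open_ereal_vimage by blast
    moreover have "r \<in> ereal -` U" using U r by auto
    ultimately obtain e where e: "e > 0" "ball r e \<subseteq> ereal -` U"
      using open_contains_ball by blast
    have "r - e/2 \<in> ball r e" using e by (auto simp: dist_real_def)
    then have "r - e/2 \<in> ereal -` U" using e by blast
    then have "ereal (r - e/2) \<in> ereal ` R" using U by auto
    then have "Inf (ereal ` R) \<le> ereal (r - e/2)" by (rule Inf_lower)
    also have "\<dots> < x" using r e by simp
    finally show "x \<in> {Inf (ereal ` R)<..<\<infinity>}" using r by simp
  qed
qed

lemma interior_infty: "interior {\<infinity>::ereal} = {}"
proof (rule ccontr)
  assume "interior {\<infinity>::ereal} \<noteq> {}"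
  then obtain x where "x \<in> interior {\<infinity>::ereal}" by blast
  then obtain U where U: "open U" "x \<in> U" "U \<subseteq> {\<infinity>::ereal}" by (meson interiorE)
  then have "\<infinity> \<in> U" by auto
  then obtain y where "{ereal y<..} \<subseteq> U" using open_PInfty U by blast
  then have "ereal (y+1) \<in> U" by auto
  then show False using U by auto
qed

lemma Xi_measure_le:
  assumes "t \<ge> 0"
  shows "measure lborel (DoS_Xi m h tau 0 t) \<le> t"
proof (cases "DoS_Xi m h tau 0 t \<in> sets lborel")
  case True
  have "measure lborel (DoS_Xi m h tau 0 t) \<le> measure lborel {0..t}"
    proof (rule measure_mono_fmeasurable)
    show "{0..t} \<in> fmeasurable lborel" using assms by (simp add: fmeasurable_def emeasure_lborel_Icc)
  qed (use True in \<open>auto simp: DoS_Xi_def\<close>)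
  then show ?thesis using assms by simp
next
  case False
  then show ?thesis using assms by (simp add: measure_notin_sets)
qed

theorem proposition1:
  fixes m :: enat and h tau :: "nat \<Rightarrow> real"
  assumes "is_DoS m h tau"
  shows "interior (DoS_D m h tau) = {Inf (DoS_D m h tau)<..<1}
       \<and> interior (DoS_F m h tau) = {Inf (DoS_F m h tau)<..<\<infinity>}"
proof
  show "interior (DoS_D m h tau) = {Inf (DoS_D m h tau)<..<1}"
  proof (rule interior_real_upclosed)
    show "1 \<in> DoS_D m h tau"
      unfolding DoS_D_def duration_bound_def
      using Xi_measure_le by (auto intro!: exI[of _ 1] order_trans[OF Xi_measure_le])
    show "x \<le> 1" if "x \<in> DoS_D m h tau" for x using that by (simp add: DoS_D_def duration_bound_def)
    show "bdd_below (DoS_D m h tau)"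
      by (rule bdd_belowI[of _ 0]) (simp add: DoS_D_def duration_bound_def)
    show "y \<in> DoS_D m h tau" if xD: "x \<in> DoS_D m h tau" and xy: "x \<le> y" and y1: "y \<le> 1" for x y
    proof -
      obtain k where k: "0 < k" "\<forall>t\<ge>0. measure lborel (DoS_Xi m h tau 0 t) \<le> k + x * t" "0 \<le> x"
        using xD unfolding DoS_D_def duration_bound_def by blast
      have "\<forall>t\<ge>0. measure lborel (DoS_Xi m h tau 0 t) \<le> k + y * t"
      proof (intro allI impI)
        fix t :: real assume "t \<ge> 0"
        then have "x * t \<le> y * t" using xy by (simp add: mult_right_mono)
        then show "measure lborel (DoS_Xi m h tau 0 t) \<le> k + y * t" using k \<open>t \<ge> 0\<close> by force
      qed
      then show ?thesis using k xy y1 by (auto simp: DoS_D_def duration_bound_def)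
    qed
  qed
next
  show "interior (DoS_F m h tau) = {Inf (DoS_F m h tau)<..<\<infinity>}"
  proof (cases "\<exists>B. finite_frequency_bound m h tau B")
    case False
    then show ?thesis by (simp add: DoS_F_def interior_infty)
  next
    case True
    have up: "y \<in> {B. finite_frequency_bound m h tau B}"
      if xF: "x \<in> {B. finite_frequency_bound m h tau B}" and xy: "x \<le> y" for x y
    proof -
      obtain L :: nat where L: "0 < L" "\<forall>t\<ge>0. DoS_n m h tau 0 t \<le> ereal (real L + x * t)" "0 \<le> x"
        using xF unfolding finite_frequency_bound_def by blast
      have "\<forall>t\<ge>0. DoS_n m h tau 0 t \<le> ereal (real L + y * t)"
      proof (intro allI impI)
        fix t :: real assume "t \<ge> 0"
        then have "x * t \<le> y * t" using xy by (simp add: mult_right_mono)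
        then have "ereal (real L + x * t) \<le> ereal (real L + y * t)" by simp
        then show "DoS_n m h tau 0 t \<le> ereal (real L + y * t)" using L \<open>t \<ge> 0\<close> order_trans by blast
      qed
      then show ?thesis using L xy by (auto simp: finite_frequency_bound_def)
    qed
    have "interior (ereal ` {B. finite_frequency_bound m h tau B})
        = {Inf (ereal ` {B. finite_frequency_bound m h tau B})<..<\<infinity>}"
      by (rule interior_ereal_upclosed) (use True up in auto)
    then show ?thesis using True by (simp add: DoS_F_def)
  qed
qed

end
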